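(* Let $z_i=(x_i,y_i)$, $i=1,\dots,n$, be training data with $y_i\in\mathbb{R}$, and let $\ell(a,b)$ be a loss function that is continuous and differentiable almost everywhere, with $\ell'(a,b)=\partial\ell(a,b)/\partial b$. Index by $b$ the $B=n^n$ bootstrap samples (ordered $n$-tuples of indices in $\{1,\dots,n\}$), and for each $b$ let $\widehat{y_j}^{(b)}$ be the prediction for observation $j$ of the tree grown on sample $b$, assumed to be a deterministic function of $b$. Let $N_i^{(b)}$ be the number of times observation $i$ occurs in sample $b$ and $I_j^{(b)}=\mathbf{1}(N_j^{(b)}=0)$. For a weight vector $W=(w_1,\dots,w_n)$ with $\sum_i w_i=1$, let $g_W(b)$ be the probability of drawing bootstrap sample $b$ when each of the $n$ draws selects observation $k$ with probability $w_k$, and define $$S(\hat F_W)=\sum_{j=1}^n w_j\,\ell\!\left(y_j,\ \frac{\sum_b \widehat{y_j}^{(b)} I_j^{(b)} g_W(b)}{\sum_b I_j^{(b)} g_W(b)}\right).$$ Let $\hat F=\hat F_{W_0}$ with $W_0=(1/n,\dots,1/n)$, so $S(\hat F)=\frac1n\sum_j\ell(y_j,\widehat{y_j}^{\mathrm{OOB}})$ where $\widehat{y_j}^{\mathrm{OOB}}=\frac{\sum_b \widehat{y_j}^{(b)}I_j^{(b)}}{\sum_b I_j^{(b)}}$. For $\varepsilon$ near $0$ let $\hat F_{\varepsilon,i}$ put weight $\frac{1-\varepsilon}{n}+\varepsilon$ on $z_i$ and $\frac{1-\varepsilon}{n}$ on each $z_j$, $j\neq i$, and define $\hat D_i=\frac1n\frac{\partial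 S(\hat F_{\varepsilon,i})}{\partial\varepsilon}\big|_{\varepsilon=0}$. Then, with $e_n=(1-1/n)^{-n}$, $$\hat D_i=\frac1n\left\{\ell(y_i,\widehat{y_i}^{\mathrm{OOB}})-\frac1n\sum_j\ell(y_j,\widehat{y_j}^{\mathrm{OOB}})\right\}+\frac{e_n}{n}\sum_j \ell'(y_j,\widehat{y_j}^{\mathrm{OOB}})\left\{\frac1B\sum_b (N_i^{(b)}-1)I_j^{(b)}\big(\widehat{y_j}^{(b)}-\widehat{y_j}^{\mathrm{OOB}}\big)\right\}.$$
   Context: This is the out-of-bag (OOB) error of a bagged ensemble of trees under a general loss $\ell$, viewed as a functional $S$ of a weighted empirical distribution on the training data; $\hat D_i$ is $1/n$ times the empirical influence function of $S$. All sums over $b$ range over all $B=n^n$ bootstrap samples. *)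

theory Defs
  imports "HOL-Analysis.Analysis" "HOL-Library.FuncSet"
begin

text \<open>Observations are indexed 0..n-1. A bootstrap sample is an ordered n-tuple of
indices, i.e. a function from draw positions {0..<n} to observation indices {0..<n}.\<close>

definition boot :: "nat \<Rightarrow> (nat \<Rightarrow> nat) set" where
  "boot n = {0..<n} \<rightarrow>\<^sub>E {0..<n}"

definition Ncount :: "nat \<Rightarrow> (nat \<Rightarrow> nat) \<Rightarrow> nat \<Rightarrow> nat" where
  "Ncount n b i = card {k \<in> {0..<n}. b k = i}"

definition Iout :: "nat \<Rightarrow> (nat \<Rightarrow> nat) \<Rightarrow> nat \<Rightarrow> real" where
  "Iout n b j = (if Ncount n b j = 0 then 1 else 0)"

definition gW :: "nat \<Rightarrow> (nat \<Rightarrow> real) \<Rightarrow> (nat \<Rightarrow> nat) \<Rightarrow> real" where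
  "gW n w b = (\<Prod>k<n. w (b k))"

definition S_W :: "nat \<Rightarrow> (real \<Rightarrow> real \<Rightarrow> real) \<Rightarrow> (nat \<Rightarrow> real)
    \<Rightarrow> ((nat \<Rightarrow> nat) \<Rightarrow> nat \<Rightarrow> real) \<Rightarrow> (nat \<Rightarrow> real) \<Rightarrow> real" where
  "S_W n loss y yhat w =
     (\<Sum>j<n. w j * loss (y j)
        ((\<Sum>b\<in>boot n. yhat b j * Iout n b j * gW n w b) /
         (\<Sum>b\<in>boot n. Iout n b j * gW n w b)))"

definition yOOB :: "nat \<Rightarrow> ((nat \<Rightarrow> nat) \<Rightarrow> nat \<Rightarrow> real) \<Rightarrow> nat \<Rightarrow> real" where
  "yOOB n yhat j =
     (\<Sum>b\<in>boot n. yhat b j * Iout n b j) / (\<Sum>b\<in>boot n. Iout n b j)"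

definition W_eps :: "nat \<Rightarrow> nat \<Rightarrow> real \<Rightarrow> nat \<Rightarrow> real" where
  "W_eps n i \<epsilon> k = (1 - \<epsilon>) / real n + (if k = i then \<epsilon> else 0)"

end

theory Submission
  imports Defs
begin

lemma g_deriv:
  fixes n i :: nat and b :: "nat \<Rightarrow> nat"
  assumes "n > 0"
  shows "((\<lambda>\<epsilon>. gW n (W_eps n i \<epsilon>) b) has_real_derivative
           (1 / real n) ^ (n - 1) * (real (Ncount n b i) - 1)) (at 0)"
proof -
  have d: "((\<lambda>\<epsilon>. (1 - \<epsilon>) / real n + (if b k = i then \<epsilon> else 0)) has_real_derivative
           (- 1 / real n + (if b k = i then 1 else 0))) (at 0)" for k
    by (cases "b k = i") (use assms in \<open>auto intro!: derivative_eq_intros\<close>)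
  have "((\<lambda>\<epsilon>. \<Prod>k<n. (1 - \<epsilon>) / real n + (if b k = i then \<epsilon> else 0)) has_real_derivative
      (\<Sum>k<n. (- 1 / real n + (if b k = i then 1 else 0)) *
          (\<Prod>l\<in>{..<n}-{k}. (1 - 0) / real n + (if b l = i then 0 else 0)))) (at 0)"
    by (rule has_field_derivative_prod[OF d])
  moreover have "(\<Sum>k<n. (- 1 / real n + (if b k = i then 1 else 0)) *
          (\<Prod>l\<in>{..<n}-{k}. (1 - 0) / real n + (if b l = i then 0 else 0)))
      = (\<Sum>k<n. (- 1 / real n + (if b k = i then 1 else 0))) * (1 / real n) ^ (n - 1)"
    by (simp add: sum_distrib_right card_Diff_singleton)
  moreover have "(\<Sum>k<n. (- 1 / real n + (if b k = i then 1 else 0))) = real (Ncount n b i) - 1"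
  proof -
    have "(\<Sum>k<n. (if b k = i then 1 else 0::real)) = real (card {k \<in> {..<n}. b k = i})"
      by (simp add: sum.If_cases) (rule arg_cong[where f=card], auto)
    moreover have "(\<Sum>k<n. (- 1 / real n)) = -1" using assms by simp
    moreover have "(\<Sum>k<n. (- 1 / real n + (if b k = i then 1 else 0))) =
       (\<Sum>k<n. (- 1 / real n)) + (\<Sum>k<n. (if b k = i then 1 else 0::real))"
      by (rule sum.distrib)
    ultimately show ?thesis unfolding Ncount_def
      by (simp add: atLeast0LessThan)
  qed
  ultimately show ?thesis unfolding gW_def W_eps_def by (simp add: mult.commute)
qed

lemma g0: "gW n (W_eps n i 0) b = (1 / real n) ^ n"
  by (simp add: gW_def W_eps_def)

lemma sumI:
  assumes "j < n"
  shows "(\<Sum>b\<in>boot n. Iout n b j) = real (n - 1) ^ n"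
proof -
  have fin: "finite (boot n)" unfolding boot_def by (simp add: finite_PiE)
  have "(\<Sum>b\<in>boot n. Iout n b j) = real (card (boot n \<inter> {b. Ncount n b j = 0}))"
    unfolding Iout_def using fin by (simp add: sum.If_cases)
  also have "(boot n \<inter> {b. Ncount n b j = 0}) = {0..<n} \<rightarrow>\<^sub>E ({0..<n} - {j})"
    unfolding boot_def Ncount_def by (auto simp: PiE_iff)
  also have "card ({0..<n} \<rightarrow>\<^sub>E ({0..<n} - {j})) = (n - 1) ^ n"
    using assms by (simp add: card_PiE)
  finally show ?thesis by simp
qed

theorem theorem2:
  fixes n :: nat and i :: nat
    and loss loss' :: "real \<Rightarrow> real \<Rightarrow> real"
    and y :: "nat \<Rightarrow> real"
    and yhat :: "(nat \<Rightarrow> nat) \<Rightarrow> nat \<Rightarrow> real"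
  assumes n2: "n \<ge> 2"
    and i_lt: "i < n"
    and loss_cont: "continuous_on UNIV (\<lambda>(a, b). loss a b)"
    and loss_deriv: "\<forall>j<n. (loss (y j) has_real_derivative loss' (y j) (yOOB n yhat j))
                              (at (yOOB n yhat j))"
  shows "((\<lambda>\<epsilon>. S_W n loss y yhat (W_eps n i \<epsilon>)) has_real_derivative
           real n *
           ((1 / real n) * (loss (y i) (yOOB n yhat i)
                 - (1 / real n) * (\<Sum>j<n. loss (y j) (yOOB n yhat j)))
            + ((1 - 1 / real n) powr (- real n)) / real n *
              (\<Sum>j<n. loss' (y j) (yOOB n yhat j) *
                 ((1 / real (n ^ n)) *
                  (\<Sum>b\<in>boot n. (real (Ncount n b i) - 1) * Iout n b j *
                                  (yhat b j - yOOB n yhat j))))))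
         (at 0)"
proof -
  define m where "m = real n"
  have m0: "m > 0" and m2: "m \<ge> 2" using n2 by (auto simp: m_def)
  have n0: "n > 0" using n2 by simp
  define p where "p = (1 / m) ^ (n - 1)"
  have pn: "(1 / real n) ^ n = p / m"
    using n0 unfolding p_def m_def by (cases n) auto
  have p0: "p > 0" using m0 by (simp add: p_def)
  define K where "K = real (n - 1) ^ n"
  have Km: "real (n - 1) = m - 1" using n0 by (simp add: m_def of_nat_diff)
  have K0: "K > 0" using n2 by (simp add: K_def)
  have fin: "finite (boot n)" unfolding boot_def by (simp add: finite_PiE)
  define gd where "gd b = p * (real (Ncount n b i) - 1)" for b
  have dg: "((\<lambda>\<epsilon>. gW n (W_eps n i \<epsilon>) b) has_real_derivative gd b) (at 0)" for b
    using g_deriv[OF n0, of i b] by (simp add: gd_def p_def m_def)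
  define A where "A j \<epsilon> = (\<Sum>b\<in>boot n. yhat b j * Iout n b j * gW n (W_eps n i \<epsilon>) b)" for j \<epsilon>
  define C where "C j \<epsilon> = (\<Sum>b\<in>boot n. Iout n b j * gW n (W_eps n i \<epsilon>) b)" for j \<epsilon>
  define A' where "A' j = (\<Sum>b\<in>boot n. yhat b j * Iout n b j * gd b)" for j
  define C' where "C' j = (\<Sum>b\<in>boot n. Iout n b j * gd b)" for j
  have dA: "(A j has_real_derivative A' j) (at 0)" for j
    unfolding A_def A'_def by (intro DERIV_sum DERIV_cmult dg)
  have dC: "(C j has_real_derivative C' j) (at 0)" for j
    unfolding C_def C'_def by (intro DERIV_sum DERIV_cmult dg)
  have A0: "A j 0 = (p / m) * (\<Sum>b\<in>boot n. yhat b j * Iout n b j)" for j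
    unfolding A_def g0 pn by (simp add: sum_distrib_left sum_divide_distrib mult_ac)
  have C0: "C j 0 = (p / m) * K" if "j < n" for j
    unfolding C_def g0 pn using sumI[OF that] by (simp add: sum_divide_distrib[symmetric] sum_distrib_left[symmetric] sum_distrib_right[symmetric] K_def mult.commute)
  have C0nz: "C j 0 \<noteq> 0" if "j < n" for j using C0[OF that] p0 m0 K0 by simp
  have R0: "A j 0 / C j 0 = yOOB n yhat j" if "j < n" for j
    unfolding A0 C0[OF that] yOOB_def sumI[OF that] K_def using p0 m0 by simp
  define Q where "Q j = (\<Sum>b\<in>boot n. (real (Ncount n b i) - 1) * Iout n b j *
                                  (yhat b j - yOOB n yhat j))" for j
  have Rd: "(A' j * C j 0 - A j 0 * C' j) / (C j 0 * C j 0) = m * Q j / K" if "j < n" for j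
  proof -
    have S1: "(\<Sum>b\<in>boot n. yhat b j * Iout n b j) = yOOB n yhat j * K"
      unfolding yOOB_def sumI[OF that] K_def using K0 n2 K_def by simp
    define Sa where "Sa = (\<Sum>b\<in>boot n. yhat b j * Iout n b j * (real (Ncount n b i) - 1))"
    define Sc where "Sc = (\<Sum>b\<in>boot n. Iout n b j * (real (Ncount n b i) - 1))"
    have Ae: "A' j = p * Sa" unfolding A'_def Sa_def gd_def
      by (simp add: sum_distrib_left mult_ac)
    have Ce: "C' j = p * Sc" unfolding C'_def Sc_def gd_def
      by (simp add: sum_distrib_left mult_ac)
    have Qe: "Q j = Sa - yOOB n yhat j * Sc" unfolding Q_def Sa_def Sc_def
      by (simp add: sum_distrib_left sum_subtractf[symmetric] algebra_simps)
    show ?thesis unfolding Ae Ce Qe A0 C0[OF that] S1 using p0 m0 K0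
      by (simp add: field_simps power2_eq_square)
  qed
  define dW where "dW j = (if j = i then 1 else 0) - 1 / m" for j
  have dWd: "((\<lambda>\<epsilon>. W_eps n i \<epsilon> j) has_real_derivative dW j) (at 0)" for j
    unfolding W_eps_def dW_def m_def
    by (cases "j = i") (use n0 in \<open>auto intro!: derivative_eq_intros\<close>)
  have dterm: "((\<lambda>\<epsilon>. W_eps n i \<epsilon> j * loss (y j) (A j \<epsilon> / C j \<epsilon>)) has_real_derivative
       dW j * loss (y j) (yOOB n yhat j) + (1 / m) * (loss' (y j) (yOOB n yhat j) * (m * Q j / K))) (at 0)"
    if "j < n" for j
  proof -
    have "((\<lambda>\<epsilon>. A j \<epsilon> / C j \<epsilon>) has_real_derivative m * Q j / K) (at 0)"
      using DERIV_divide[OF dA[of j] dC[of j] C0nz[OF that]] Rd[OF that] by simp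
    moreover have "(loss (y j) has_real_derivative loss' (y j) (yOOB n yhat j)) (at (A j 0 / C j 0))"
      using loss_deriv that R0[OF that] by simp
    ultimately have LD: "((\<lambda>\<epsilon>. loss (y j) (A j \<epsilon> / C j \<epsilon>)) has_real_derivative
        loss' (y j) (yOOB n yhat j) * (m * Q j / K)) (at 0)"
      by (rule DERIV_chain2[rotated])
    have W0: "W_eps n i 0 j = 1 / m" by (simp add: W_eps_def m_def)
    from DERIV_mult[OF dWd[of j] LD] show ?thesis
      unfolding W0 R0[OF that] by (rule DERIV_cong) simp
  qed
  have Seq: "(\<lambda>\<epsilon>. S_W n loss y yhat (W_eps n i \<epsilon>)) =
     (\<lambda>\<epsilon>. \<Sum>j<n. W_eps n i \<epsilon> j * loss (y j) (A j \<epsilon> / C j \<epsilon>))"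
    unfolding S_W_def A_def C_def by simp
  have D: "((\<lambda>\<epsilon>. S_W n loss y yhat (W_eps n i \<epsilon>)) has_real_derivative
     (\<Sum>j<n. dW j * loss (y j) (yOOB n yhat j) + (1 / m) * (loss' (y j) (yOOB n yhat j) * (m * Q j / K)))) (at 0)"
    unfolding Seq by (intro DERIV_sum dterm) simp
  show ?thesis
  proof (rule DERIV_cong[OF D])
    have e: "(1 - 1 / m) powr (- m) = m ^ n / K"
    proof -
      have pos: "1 - 1 / m > 0" using m2 by simp
      have "(1 - 1 / m) powr (- m) = 1 / (1 - 1 / m) powr m"
        by (simp add: powr_minus divide_inverse)
      also have "(1 - 1 / m) powr m = (1 - 1 / m) ^ n"
        unfolding m_def by (rule powr_realpow) (use pos in \<open>simp add: m_def\<close>)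
      finally have "(1 - 1 / m) powr (- m) = 1 / (1 - 1 / m) ^ n" .
      also have "(1 - 1 / m) ^ n = K / m ^ n"
      proof -
        have KK: "K = (m - 1) ^ n" unfolding K_def Km ..
        show ?thesis using m0 unfolding KK by (simp add: field_simps power_divide)
      qed
      finally show ?thesis using K0 m0 by simp
    qed
    have s1: "(\<Sum>j<n. dW j * loss (y j) (yOOB n yhat j)) =
        loss (y i) (yOOB n yhat i) - (1 / m) * (\<Sum>j<n. loss (y j) (yOOB n yhat j))"
    proof -
      have "(\<Sum>j<n. dW j * loss (y j) (yOOB n yhat j)) =
         (\<Sum>j<n. (if j = i then loss (y j) (yOOB n yhat j) else 0) - (1 / m) * loss (y j) (yOOB n yhat j))"
        unfolding dW_def by (rule sum.cong) (auto simp: algebra_simps)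
      also have "\<dots> = loss (y i) (yOOB n yhat i) - (1 / m) * (\<Sum>j<n. loss (y j) (yOOB n yhat j))"
        using i_lt by (simp add: sum_subtractf sum_distrib_left)
      finally show ?thesis .
    qed
    have s2: "(\<Sum>j<n. (1 / m) * (loss' (y j) (yOOB n yhat j) * (m * Q j / K))) =
        (\<Sum>j<n. loss' (y j) (yOOB n yhat j) * Q j) / K"
      using m0 by (simp add: sum_divide_distrib)
    have s3: "(\<Sum>j<n. loss' (y j) (yOOB n yhat j) * (1 / m ^ n * Q j)) =
        (\<Sum>j<n. loss' (y j) (yOOB n yhat j) * Q j) / m ^ n"
      by (simp add: sum_divide_distrib m_def)
    show "(\<Sum>j<n. dW j * loss (y j) (yOOB n yhat j) + (1 / m) * (loss' (y j) (yOOB n yhat j) * (m * Q j / K))) =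
        real n * ((1 / real n) * (loss (y i) (yOOB n yhat i)
                 - (1 / real n) * (\<Sum>j<n. loss (y j) (yOOB n yhat j)))
            + ((1 - 1 / real n) powr (- real n)) / real n *
              (\<Sum>j<n. loss' (y j) (yOOB n yhat j) *
                 ((1 / real (n ^ n)) *
                  (\<Sum>b\<in>boot n. (real (Ncount n b i) - 1) * Iout n b j *
                                  (yhat b j - yOOB n yhat j)))))"
      unfolding of_nat_power m_def[symmetric] sum.distrib s1 s2 e Q_def[symmetric] s3
      using m0 K0 by (simp add: field_simps)
  qed
qed

end
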